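(* Let $G$ be a topological group and $A$ a topological $G$-module. Then the inclusion $j_h^*\colon C_{lc}^*(G,A)\hookrightarrow \mathrm{Tot}\,A_{lc}^{*,*}(G,A)^G$ induces an isomorphism in cohomology.
   Context: A topological $G$-module is an abelian topological group $A$ with an action of $G$ by group automorphisms such that the action map $G\times A\to A$ is continuous. For an identity neighbourhood $U$ of $G$ put $\Gamma_U^0:=G$ and, for $p\ge 1$, $\Gamma_U^p:=\{(g_0,\dots,g_p)\in G^{p+1}\mid g_i^{-1}g_j\in U \text{ for all } 0\le i,j\le p\}$. The group $G$ acts on maps $f\colon G^{n+1}\to A$ by $(g.f)(g_0,\dots,g_n)=g.\big(f(g^{-1}g_0,\dots,g^{-1}g_n)\big)$; the fixed points are the equivariant (homogeneous) cochains, with the differential $df(g_0,\dots,g_{n+1})=\sum_{i=0}^{n+1}(-1)^i f(g_0,\dots,\widehat{g_i},\dots,g_{n+1})$. $C_{lc}^n(G,A)$ denotes the group of $G$-equivariant maps $f\colon G^{n+1}\to A$ whose restriction to $\Gamma_U^n$ is continuous for some identity neighbourhood $U$. For $p,q\ge 0$, $A_{lc}^{p,q}(G,A)$ is the group of maps $f\colon G^{p+1}\times G^{q+1}\to A$ such that for some identity neighbourhood $U$ the restriction of $f$ to $G^{p+1}\times\Gamma_U^q$ is continuous, with differentials $d_h f(x_0,\dots,x_{p+1},\vec y)=\sum_{i=0}^{p+1}(-1)^i f(x_0,\dots,\widehat{x_i},\dots,x_{p+1},\vec y)$ and $d_v f(\vec x,y_0,\dots,y_{q+1})=(-1)^p\sum_{i=0}^{q+1}(-1)^i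 f(\vec x,y_0,\dots,\widehat{y_i},\dots,y_{q+1})$. $G$ acts on these by $(g.f)(\vec x,\vec y)=g.f(g^{-1}\vec x,g^{-1}\vec y)$ (diagonal action on all arguments), and $A_{lc}^{p,q}(G,A)^G$ denotes the fixed points, a sub double complex. $\mathrm{Tot}\,A_{lc}^{*,*}(G,A)^G$ is its total complex, $\mathrm{Tot}^n=\bigoplus_{p+q=n}A_{lc}^{p,q}(G,A)^G$ with differential $d_h+d_v$. The map $j_h^q\colon C_{lc}^q(G,A)\to A_{lc}^{0,q}(G,A)^G\subset \mathrm{Tot}^q$ is the row augmentation $j_h(f)(x_0,\vec y)=f(\vec y)$. *)

theory Defs
  imports "HOL-Analysis.Analysis" "HOL-Library.Function_Algebras"
begin

text \<open>The topological group G is a type 'g of class topological_group_add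
(a not necessarily commutative group, written additively: unit 0, product +, inverse uminus,
with continuous product and inverse). Tuples (g_0,...,g_n) in G^(n+1) are
extensional functions in PiE {..n} (\<lambda>_. UNIV), with the product topology.
Cochains are extensional: they vanish outside the tuple domain.\<close>

definition topological_G_module :: "('g::topological_group_add \<Rightarrow> 'a::topological_ab_group_add \<Rightarrow> 'a) \<Rightarrow> bool" where
  "topological_G_module act \<longleftrightarrow>
     (\<forall>a. act 0 a = a) \<and>
     (\<forall>g h a. act (g + h) a = act g (act h a)) \<and>
     (\<forall>g a b. act g (a + b) = act g a + act g b) \<and>
     continuous_on UNIV (\<lambda>(g, a). act g a)"

definition tuples :: "nat \<Rightarrow> (nat \<Rightarrow> 'g) set" where
  "tuples n = PiE {..n} (\<lambda>_. UNIV)"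

definition tuple_top :: "nat \<Rightarrow> (nat \<Rightarrow> 'g::topological_space) topology" where
  "tuple_top n = product_topology (\<lambda>_. euclidean) {..n}"

text \<open>Delete the i-th entry of an (n+1)-tuple (indices 0..n+1 to 0..n).\<close>
definition face :: "nat \<Rightarrow> nat \<Rightarrow> (nat \<Rightarrow> 'g) \<Rightarrow> (nat \<Rightarrow> 'g)" where
  "face n i x = restrict (\<lambda>j. if j < i then x j else x (Suc j)) {..n}"

definition gtr :: "nat \<Rightarrow> 'g::group_add \<Rightarrow> (nat \<Rightarrow> 'g) \<Rightarrow> (nat \<Rightarrow> 'g)" where
  "gtr n g x = restrict (\<lambda>j. g + x j) {..n}"

definition identity_nbhd :: "'g::topological_group_add set \<Rightarrow> bool" where
  "identity_nbhd U \<longleftrightarrow> (\<exists>V. open V \<and> 0 \<in> V \<and> V \<subseteq> U)"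

definition Gamma :: "'g::group_add set \<Rightarrow> nat \<Rightarrow> (nat \<Rightarrow> 'g) set" where
  "Gamma U p = (if p = 0 then tuples 0
     else {x \<in> tuples p. \<forall>i\<le>p. \<forall>j\<le>p. - x i + x j \<in> U})"

definition altsum :: "nat \<Rightarrow> (nat \<Rightarrow> 'a::ab_group_add) \<Rightarrow> 'a" where
  "altsum m h = (\<Sum>i\<le>m. if even i then h i else - h i)"

definition Clc :: "('g::topological_group_add \<Rightarrow> 'a::topological_ab_group_add \<Rightarrow> 'a) \<Rightarrow> nat
     \<Rightarrow> ((nat \<Rightarrow> 'g) \<Rightarrow> 'a) set" where
  "Clc act n = {f.
     (\<forall>x. x \<notin> tuples n \<longrightarrow> f x = 0) \<and>
     (\<forall>g. \<forall>x\<in>tuples n. act g (f (gtr n (- g) x)) = f x) \<and>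
     (\<exists>U. identity_nbhd U \<and>
        continuous_map (subtopology (tuple_top n) (Gamma U n)) euclidean f)}"

definition dC :: "nat \<Rightarrow> ((nat \<Rightarrow> 'g) \<Rightarrow> 'a::ab_group_add) \<Rightarrow> ((nat \<Rightarrow> 'g) \<Rightarrow> 'a)" where
  "dC n f x = (if x \<in> tuples (Suc n) then altsum (Suc n) (\<lambda>i. f (face n i x)) else 0)"

definition AlcG :: "('g::topological_group_add \<Rightarrow> 'a::topological_ab_group_add \<Rightarrow> 'a) \<Rightarrow> nat \<Rightarrow> nat
     \<Rightarrow> ((nat \<Rightarrow> 'g) \<Rightarrow> (nat \<Rightarrow> 'g) \<Rightarrow> 'a) set" where
  "AlcG act p q = {f.
     (\<forall>x y. \<not> (x \<in> tuples p \<and> y \<in> tuples q) \<longrightarrow> f x y = 0) \<and>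
     (\<forall>g. \<forall>x\<in>tuples p. \<forall>y\<in>tuples q. act g (f (gtr p (- g) x) (gtr q (- g) y)) = f x y) \<and>
     (\<exists>U. identity_nbhd U \<and>
        continuous_map (subtopology (prod_topology (tuple_top p) (tuple_top q))
                                    (tuples p \<times> Gamma U q))
                       euclidean (\<lambda>(x, y). f x y))}"

definition dh :: "nat \<Rightarrow> nat \<Rightarrow> ((nat \<Rightarrow> 'g) \<Rightarrow> (nat \<Rightarrow> 'g) \<Rightarrow> 'a::ab_group_add)
     \<Rightarrow> ((nat \<Rightarrow> 'g) \<Rightarrow> (nat \<Rightarrow> 'g) \<Rightarrow> 'a)" where
  "dh p q f x y = (if x \<in> tuples (Suc p) \<and> y \<in> tuples q
     then altsum (Suc p) (\<lambda>i. f (face p i x) y) else 0)"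

definition dv :: "nat \<Rightarrow> nat \<Rightarrow> ((nat \<Rightarrow> 'g) \<Rightarrow> (nat \<Rightarrow> 'g) \<Rightarrow> 'a::ab_group_add)
     \<Rightarrow> ((nat \<Rightarrow> 'g) \<Rightarrow> (nat \<Rightarrow> 'g) \<Rightarrow> 'a)" where
  "dv p q f x y = (if x \<in> tuples p \<and> y \<in> tuples (Suc q)
     then (let s = altsum (Suc q) (\<lambda>i. f x (face q i y)) in if even p then s else - s) else 0)"

text \<open>Total complex: an element of Tot^n is a family t with t p \<in> A^{p,n-p} for p \<le> n
and t p = 0 for p > n (direct sum over p+q=n).\<close>
definition Tot :: "('g::topological_group_add \<Rightarrow> 'a::topological_ab_group_add \<Rightarrow> 'a) \<Rightarrow> nat
     \<Rightarrow> (nat \<Rightarrow> (nat \<Rightarrow> 'g) \<Rightarrow> (nat \<Rightarrow> 'g) \<Rightarrow> 'a) set" where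
  "Tot act n = {t. (\<forall>p\<le>n. t p \<in> AlcG act p (n - p)) \<and> (\<forall>p>n. t p = 0)}"

definition dTot :: "nat \<Rightarrow> (nat \<Rightarrow> (nat \<Rightarrow> 'g) \<Rightarrow> (nat \<Rightarrow> 'g) \<Rightarrow> 'a::ab_group_add)
     \<Rightarrow> (nat \<Rightarrow> (nat \<Rightarrow> 'g) \<Rightarrow> (nat \<Rightarrow> 'g) \<Rightarrow> 'a)" where
  "dTot n t = (\<lambda>p. if p \<le> Suc n then
       (if 1 \<le> p then dh (p - 1) (Suc n - p) (t (p - 1)) else 0)
     + (if p \<le> n then dv p (n - p) (t p) else 0)
     else 0)"

definition jh :: "nat \<Rightarrow> ((nat \<Rightarrow> 'g) \<Rightarrow> 'a::ab_group_add)
     \<Rightarrow> (nat \<Rightarrow> (nat \<Rightarrow> 'g) \<Rightarrow> (nat \<Rightarrow> 'g) \<Rightarrow> 'a)" where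
  "jh n f = (\<lambda>p. if p = 0 then (\<lambda>x y. if x \<in> tuples 0 \<and> y \<in> tuples n then f y else 0) else 0)"

definition cocycles :: "(nat \<Rightarrow> 'c::ab_group_add set) \<Rightarrow> (nat \<Rightarrow> 'c \<Rightarrow> 'c) \<Rightarrow> nat \<Rightarrow> 'c set" where
  "cocycles C d n = {z \<in> C n. d n z = 0}"

definition coboundaries :: "(nat \<Rightarrow> 'c::ab_group_add set) \<Rightarrow> (nat \<Rightarrow> 'c \<Rightarrow> 'c) \<Rightarrow> nat \<Rightarrow> 'c set" where
  "coboundaries C d n = (if n = 0 then {0} else d (n - 1) ` C (n - 1))"

text \<open>The cochain map \<phi> induces an isomorphism H^n(C) \<rightarrow> H^n(C') for every n, where
H^n = cocycles / coboundaries: injectivity (trivial kernel) and surjectivity of the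
induced homomorphism, written out.\<close>
definition induces_iso_in_cohomology ::
  "(nat \<Rightarrow> 'c::ab_group_add set) \<Rightarrow> (nat \<Rightarrow> 'c \<Rightarrow> 'c) \<Rightarrow>
   (nat \<Rightarrow> 'e::ab_group_add set) \<Rightarrow> (nat \<Rightarrow> 'e \<Rightarrow> 'e) \<Rightarrow> (nat \<Rightarrow> 'c \<Rightarrow> 'e) \<Rightarrow> bool" where
  "induces_iso_in_cohomology C d C' d' \<phi> \<longleftrightarrow>
     (\<forall>n. (\<forall>z\<in>cocycles C d n. \<phi> n z \<in> cocycles C' d' n) \<and>
          (\<forall>z\<in>cocycles C d n. \<phi> n z \<in> coboundaries C' d' n \<longrightarrow> z \<in> coboundaries C d n) \<and>
          (\<forall>z'\<in>cocycles C' d' n. \<exists>z\<in>cocycles C d n. z' - \<phi> n z \<in> coboundaries C' d' n))"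

end

theory Submission
  imports Defs
begin


definition eps :: "nat \<Rightarrow> 'a::ab_group_add \<Rightarrow> 'a" where
  "eps i a = (if even i then a else - a)"

lemma altsum_eps: "altsum m h = (\<Sum>i\<le>m. eps i (h i))"
  by (simp add: altsum_def eps_def)

lemma eps_add: "eps i (a + b) = eps i a + eps i b" by (simp add: eps_def)
lemma eps_minus: "eps i (- a) = - eps i a" by (simp add: eps_def)
lemma eps_eps: "eps i (eps j a) = eps (i+j) a" by (auto simp: eps_def)
lemma eps_sum: "eps i (sum f A) = sum (\<lambda>x. eps i (f x)) A"
  by (simp add: eps_def sum_negf)
lemma eps_Suc: "eps (Suc i) a = - eps i a" by (simp add: eps_def)

lemma face_face:
  assumes "i \<le> j"
  shows "face m j (face (Suc m) i x) = face m i (face (Suc m) (Suc j) x)"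
  using assms by (auto simp: face_def restrict_def fun_eq_iff)

lemma double_altsum_zero:
  fixes F :: "(nat \<Rightarrow> 'g) \<Rightarrow> 'a::ab_group_add"
  shows "altsum (Suc (Suc m)) (\<lambda>i. altsum (Suc m) (\<lambda>j. F (face m j (face (Suc m) i x)))) = 0"
proof -
  define g where "g = (\<lambda>(i,j). eps (i+j) (F (face m j (face (Suc m) i x))))"
  define P1 where "P1 = {(i,j). i \<le> j \<and> j \<le> Suc m}"
  define P2 where "P2 = {(i,j). j < i \<and> i \<le> Suc (Suc m)}"
  have fin: "finite P1" "finite P2"
    unfolding P1_def P2_def
    by (rule finite_subset[of _ "{..Suc (Suc m)} \<times> {..Suc m}"], auto)+
  have split: "{..Suc (Suc m)} \<times> {..Suc m} = P1 \<union> P2" "P1 \<inter> P2 = {}"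
    by (auto simp: P1_def P2_def)
  have "altsum (Suc (Suc m)) (\<lambda>i. altsum (Suc m) (\<lambda>j. F (face m j (face (Suc m) i x))))
      = (\<Sum>i\<le>Suc (Suc m). \<Sum>j\<le>Suc m. g (i,j))"
    by (simp only: altsum_eps eps_sum eps_eps g_def case_prod_conv)
  also have "\<dots> = sum g ({..Suc (Suc m)} \<times> {..Suc m})"
    by (simp only: sum.cartesian_product case_prod_eta)
  also have "\<dots> = sum g P1 + sum g P2"
    using split fin by (simp add: sum.union_disjoint)
  also have "sum g P2 = sum (\<lambda>p. g ((\<lambda>(i,j). (Suc j, i)) p)) P1"
  proof (rule sum.reindex_bij_betw[symmetric])
    show "bij_betw (\<lambda>(i,j). (Suc j, i)) P1 P2"
      by (rule bij_betwI[where g="\<lambda>(i,j). (j, i - 1)"]) (auto simp: P1_def P2_def)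
  qed
  also have "\<dots> = - sum g P1"
    unfolding sum_negf[symmetric]
    by (rule sum.cong) (auto simp: P1_def g_def face_face eps_Suc add.commute)
  finally show ?thesis by simp
qed

lemma face_tuples[simp]: "face n i x \<in> tuples n"
  by (simp add: face_def tuples_def)

lemma altsum_eps_out: "altsum m (\<lambda>i. eps p (h i)) = eps p (altsum m h)"
  by (simp add: altsum_eps eps_sum eps_eps add.commute)

lemma altsum_add: "altsum m (\<lambda>i. h i + k i) = altsum m h + altsum m k"
  by (simp add: altsum_eps eps_add sum.distrib)
lemma altsum_minus: "altsum m (\<lambda>i. - h i) = - altsum m h"
  by (simp add: altsum_eps eps_minus sum_negf)
lemma altsum_diff: "altsum m (\<lambda>i. h i - k i) = altsum m h - altsum m k"
  using altsum_add[of m h "\<lambda>i. - k i"] by (simp add: altsum_minus)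
lemma eps_zero: "eps i 0 = 0" by (simp add: eps_def)
lemma altsum_zero: "altsum m (\<lambda>i. 0) = 0"
  by (simp add: altsum_eps eps_zero)

lemma dv_eps: "dv p q f x y = (if x \<in> tuples p \<and> y \<in> tuples (Suc q)
     then eps p (altsum (Suc q) (\<lambda>i. f x (face q i y))) else 0)"
  by (simp add: dv_def eps_def Let_def)

lemma dh_dh: "dh (Suc p) q (dh p q f) = 0"
  by (simp add: fun_eq_iff dh_def double_altsum_zero[of _ "\<lambda>z. f z _"])

lemma dv_dv: "dv p (Suc q) (dv p q f) = 0"
  by (simp add: fun_eq_iff dv_eps altsum_eps_out eps_eps eps_zero double_altsum_zero[of _ "\<lambda>z. f _ z"])

lemma swap_lemma:
  fixes F :: "nat \<Rightarrow> nat \<Rightarrow> 'a::ab_group_add"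
  shows "altsum a (\<lambda>i. eps p (altsum b (\<lambda>j. F i j))) + eps (Suc p) (altsum b (\<lambda>j. altsum a (\<lambda>i. F i j))) = 0"
proof -
  have 1: "altsum a (\<lambda>i. eps p (altsum b (\<lambda>j. F i j))) = eps p (\<Sum>i\<le>a. \<Sum>j\<le>b. eps (i+j) (F i j))"
    by (simp only: altsum_eps eps_sum eps_eps, simp only: add_ac)
  have 2: "eps (Suc p) (altsum b (\<lambda>j. altsum a (\<lambda>i. F i j))) = - eps p (\<Sum>j\<le>b. \<Sum>i\<le>a. eps (j+i) (F i j))"
    by (simp only: eps_Suc, simp only: altsum_eps eps_sum eps_eps)
  have 3: "(\<Sum>j\<le>b. \<Sum>i\<le>a. eps (j+i) (F i j)) = (\<Sum>i\<le>a. \<Sum>j\<le>b. eps (i+j) (F i j))"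
    by (subst sum.swap) (simp only: add.commute)
  show ?thesis unfolding 1 2 3 by simp
qed

lemma dh_dv: "dh p (Suc q) (dv p q f) + dv (Suc p) q (dh p q f) = 0"
proof -
  have "altsum (Suc p) (\<lambda>i. eps p (altsum (Suc q) (\<lambda>j. f (face p i x) (face q j y))))
     + eps (Suc p) (altsum (Suc q) (\<lambda>j. altsum (Suc p) (\<lambda>i. f (face p i x) (face q j y)))) = 0"
    for x y
    by (rule swap_lemma)
  then show ?thesis
    by (simp add: fun_eq_iff dh_def dv_eps)
qed

lemma dh_add: "dh p q (f + g) = dh p q f + dh p q g"
  by (simp add: fun_eq_iff dh_def altsum_add)
lemma dh_diff: "dh p q (f - g) = dh p q f - dh p q g"
  by (simp add: fun_eq_iff dh_def altsum_diff)
lemma dh_zero[simp]: "dh p q 0 = 0"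
  by (simp add: fun_eq_iff dh_def altsum_zero)
lemma dv_add: "dv p q (f + g) = dv p q f + dv p q g"
  by (simp add: fun_eq_iff dv_eps altsum_add eps_add)
lemma dv_diff: "dv p q (f - g) = dv p q f - dv p q g"
  by (simp add: fun_eq_iff dv_eps altsum_diff eps_def)
lemma dv_zero[simp]: "dv p q 0 = 0"
  by (simp add: fun_eq_iff dv_eps altsum_zero eps_zero)




lemma mixed': "dv (Suc p) q (dh p q f) = - dh p (Suc q) (dv p q f)"
  using dh_dv[of p q f] by (simp add: eq_neg_iff_add_eq_0 add.commute)

lemma dTot_dTot: "dTot (Suc m) (dTot m s) = 0"
proof (rule ext)
  fix p
  show "dTot (Suc m) (dTot m s) p = 0 p"
  proof (cases "p \<le> Suc (Suc m)")
    case False thus ?thesis by (simp add: dTot_def)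
  next
    case True
    show ?thesis
    proof (cases p)
      case 0 thus ?thesis by (simp add: dTot_def dv_dv)
    next
      case (Suc k)
      show ?thesis
      proof (cases "k \<le> m")
        case False
        then have "k = Suc m" using True Suc by simp
        thus ?thesis using Suc by (simp add: dTot_def dh_dh)
      next
        case True
        then obtain j where m: "m = k + j" using le_Suc_ex by blast
        show ?thesis
        proof (cases k)
          case 0
          show ?thesis
          proof (cases j)
            case 0 thus ?thesis using `k = 0` Suc m by (simp add: dTot_def dh_add dv_add mixed')
          next
            case (Suc j') thus ?thesis using `k = 0` `p = Suc k` m by (simp add: dTot_def dh_add dv_add mixed' dv_dv)
          qed
        next
          case (Suc k')
          show ?thesis
          proof (cases j)
            case 0 thus ?thesis using `k = Suc k'` `p = Suc k` m by (simp add: dTot_def dh_add dv_add mixed' dh_dh)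
          next
            case (Suc j') thus ?thesis using `k = Suc k'` `p = Suc k` m by (simp add: dTot_def dh_add dv_add mixed' dv_dv dh_dh)
          qed
        qed
      qed
    qed
  qed
qed

lemma dTot_add: "dTot n (a + b) = dTot n a + dTot n b"
  by (simp add: fun_eq_iff dTot_def dh_add dv_add)
lemma dTot_diff: "dTot n (a - b) = dTot n a - dTot n b"
  by (simp add: fun_eq_iff dTot_def dh_diff dv_diff)
lemma dTot_zero: "dTot n 0 = 0"
  by (simp add: fun_eq_iff dTot_def)




lemma cmap_add:
  fixes f :: "'x \<Rightarrow> 'b::topological_monoid_add"
  shows "\<lbrakk>continuous_map X euclidean f; continuous_map X euclidean g\<rbrakk> \<Longrightarrow> continuous_map X euclidean (\<lambda>x. f x + g x)"
  by (simp add: continuous_map_atin tendsto_add)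

lemma cmap_minus:
  fixes f :: "'x \<Rightarrow> 'b::topological_group_add"
  shows "continuous_map X euclidean f \<Longrightarrow> continuous_map X euclidean (\<lambda>x. - f x)"
  by (simp add: continuous_map_atin tendsto_minus)

lemma cmap_diff:
  fixes f :: "'x \<Rightarrow> 'b::topological_group_add"
  shows "\<lbrakk>continuous_map X euclidean f; continuous_map X euclidean g\<rbrakk> \<Longrightarrow> continuous_map X euclidean (\<lambda>x. f x - g x)"
  by (simp add: continuous_map_atin tendsto_diff)

lemma cmap_sum:
  fixes f :: "'x \<Rightarrow> 'i \<Rightarrow> 'b::topological_comm_monoid_add"
  shows "\<lbrakk>finite I; \<And>i. i \<in> I \<Longrightarrow> continuous_map X euclidean (\<lambda>x. f x i)\<rbrakk>
         \<Longrightarrow> continuous_map X euclidean (\<lambda>x. sum (f x) I)"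
  by (simp add: continuous_map_atin tendsto_sum)

lemma cmap_eps:
  fixes f :: "'x \<Rightarrow> 'b::topological_ab_group_add"
  shows "continuous_map X euclidean f \<Longrightarrow> continuous_map X euclidean (\<lambda>x. eps i (f x))"
  by (cases "even i") (simp_all add: eps_def cmap_minus)

lemma cmap_altsum:
  fixes f :: "'x \<Rightarrow> nat \<Rightarrow> 'b::topological_ab_group_add"
  shows "(\<And>i. i \<le> m \<Longrightarrow> continuous_map X euclidean (\<lambda>x. f x i))
         \<Longrightarrow> continuous_map X euclidean (\<lambda>x. altsum m (f x))"
  unfolding altsum_eps by (rule cmap_sum) (auto intro: cmap_eps)

lemma topspace_tuple_top[simp]: "topspace (tuple_top n) = tuples n"
  by (simp add: tuple_top_def tuples_def)

lemma Gamma_sub: "Gamma U q \<subseteq> tuples q"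
  by (auto simp: Gamma_def)

lemma tuple_map_cont:
  assumes "\<And>k. k \<le> n \<Longrightarrow> continuous_map Z euclidean (\<lambda>z. \<phi> z k)"
  shows "continuous_map Z (tuple_top n) (\<lambda>z. restrict (\<phi> z) {..n})"
  unfolding tuple_top_def continuous_map_componentwise
  using assms by auto

lemma proj_cont: "k \<le> n \<Longrightarrow> continuous_map (tuple_top n) euclidean (\<lambda>x. x k)"
  unfolding tuple_top_def by (rule continuous_map_product_projection) simp

lemma face_cont: "continuous_map (tuple_top (Suc p)) (tuple_top p) (face p i)"
proof -
  have "continuous_map (tuple_top (Suc p)) (tuple_top p)
         (\<lambda>x. restrict (\<lambda>j. if j < i then x j else x (Suc j)) {..p})"
    by (rule tuple_map_cont) (auto intro: proj_cont)
  then show ?thesis unfolding face_def[abs_def] .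
qed

definition XT :: "nat \<Rightarrow> nat \<Rightarrow> 'g::topological_group_add set \<Rightarrow> ((nat \<Rightarrow> 'g) \<times> (nat \<Rightarrow> 'g)) topology" where
  "XT p q U = subtopology (prod_topology (tuple_top p) (tuple_top q)) (tuples p \<times> Gamma U q)"

lemma topspace_XT[simp]: "topspace (XT p q U) = tuples p \<times> Gamma U q"
  using Gamma_sub by (auto simp: XT_def)

lemma cont_XT_comp:
  assumes f: "continuous_map (XT p' q' U) euclidean (\<lambda>(x,y). f x y)"
    and a: "continuous_map Z (tuple_top p') a" and b: "continuous_map Z (tuple_top q') b"
    and m: "\<And>z. z \<in> topspace Z \<Longrightarrow> a z \<in> tuples p' \<and> b z \<in> Gamma U q'"
  shows "continuous_map Z euclidean (\<lambda>z. f (a z) (b z))"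
proof -
  have "continuous_map Z (XT p' q' U) (\<lambda>z. (a z, b z))"
    unfolding XT_def
    by (rule continuous_map_into_subtopology) (use a b m in \<open>auto simp: continuous_map_paired\<close>)
  from continuous_map_compose[OF this f] show ?thesis by (simp add: o_def)
qed

lemma XT_fst: "continuous_map (XT p q U) (tuple_top p) fst"
  unfolding XT_def by (rule continuous_map_subtopology_fst)
lemma XT_snd: "continuous_map (XT p q U) (tuple_top q) snd"
  unfolding XT_def by (rule continuous_map_subtopology_snd)

lemma face_Gamma: "y \<in> Gamma U (Suc q) \<Longrightarrow> face q i y \<in> Gamma U q"
proof -
  assume y: "y \<in> Gamma U (Suc q)"
  show ?thesis
  proof (cases q)
    case 0 thus ?thesis by (simp add: Gamma_def)
  next
    case (Suc q')
    have "\<forall>a\<le>Suc q. \<forall>b\<le>Suc q. - y a + y b \<in> U" using y by (simp add: Gamma_def)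
    then show ?thesis using Suc
      by (auto simp: Gamma_def face_def tuples_def)
  qed
qed

lemma Gamma_mono: "U \<subseteq> V \<Longrightarrow> Gamma U q \<subseteq> Gamma V q"
  by (auto simp: Gamma_def)

lemma XT_mono:
  assumes "U \<subseteq> V" "continuous_map (XT p q V) euclidean f"
  shows "continuous_map (XT p q U) euclidean f"
proof -
  have "XT p q U = subtopology (XT p q V) (tuples p \<times> Gamma U q)"
    using Gamma_mono[OF assms(1)] by (auto simp: XT_def subtopology_subtopology Int_absorb2 intro!: arg_cong[where f="subtopology _"])
  then show ?thesis using continuous_map_from_subtopology[OF assms(2)] by simp
qed

lemma identity_nbhd_Int: "identity_nbhd U \<Longrightarrow> identity_nbhd V \<Longrightarrow> identity_nbhd (U \<inter> V)"
  unfolding identity_nbhd_def by (metis Int_iff Int_mono open_Int)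




lemma AlcG_iff: "f \<in> AlcG act p q \<longleftrightarrow>
     (\<forall>x y. \<not> (x \<in> tuples p \<and> y \<in> tuples q) \<longrightarrow> f x y = 0) \<and>
     (\<forall>g. \<forall>x\<in>tuples p. \<forall>y\<in>tuples q. act g (f (gtr p (- g) x) (gtr q (- g) y)) = f x y) \<and>
     (\<exists>U. identity_nbhd U \<and> continuous_map (XT p q U) euclidean (\<lambda>(x, y). f x y))"
  by (simp add: AlcG_def XT_def)

lemma gtr_tuples[simp]: "gtr n g x \<in> tuples n"
  by (simp add: gtr_def tuples_def)

lemma face_gtr: "face n i (gtr (Suc n) g x) = gtr n g (face n i x)"
  by (auto simp: face_def gtr_def fun_eq_iff)

lemma gtr_gtr: "x \<in> tuples n \<Longrightarrow> gtr n g (gtr n (- g) x) = x"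
  by (auto simp: gtr_def fun_eq_iff tuples_def add.assoc[symmetric] PiE_def extensional_def)

lemma gtr_0: "gtr n g x 0 = g + x 0"
  by (simp add: gtr_def)

context
  fixes act :: "'g::topological_group_add \<Rightarrow> 'a::topological_ab_group_add \<Rightarrow> 'a"
  assumes M: "topological_G_module act"
begin

lemma act_add: "act g (a + b) = act g a + act g b"
  using M by (simp add: topological_G_module_def)
lemma act_zero: "act g 0 = 0"
  using act_add[of g 0 0] by simp
lemma act_minus: "act g (- a) = - act g a"
  using act_add[of g a "- a"] by (simp add: act_zero eq_neg_iff_add_eq_0 add.commute)
lemma act_eps: "act g (eps i a) = eps i (act g a)"
  by (simp add: eps_def act_minus)
lemma act_sum: "act g (sum f A) = sum (\<lambda>i. act g (f i)) A"
  by (induction A rule: infinite_finite_induct) (auto simp: act_zero act_add)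
lemma act_altsum: "act g (altsum m h) = altsum m (\<lambda>i. act g (h i))"
  by (simp add: altsum_eps act_sum act_eps)

lemma AlcG_zero: "0 \<in> AlcG act p q"
  unfolding AlcG_iff
  by (auto simp: act_zero zero_fun_def case_prod_unfold intro!: exI[of _ UNIV] simp: identity_nbhd_def)

lemma AlcG_add:
  assumes "f \<in> AlcG act p q" "g \<in> AlcG act p q"
  shows "f + g \<in> AlcG act p q"
proof -
  from assms obtain U V where U: "identity_nbhd U" "continuous_map (XT p q U) euclidean (\<lambda>(x, y). f x y)"
    and V: "identity_nbhd V" "continuous_map (XT p q V) euclidean (\<lambda>(x, y). g x y)"
    unfolding AlcG_iff by blast
  have "continuous_map (XT p q (U \<inter> V)) euclidean (\<lambda>z. (\<lambda>(x, y). f x y) z + (\<lambda>(x, y). g x y) z)"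
    by (rule cmap_add; rule XT_mono[of _ "U"] XT_mono[of _ V]) (use U V in auto)
  then have "continuous_map (XT p q (U \<inter> V)) euclidean (\<lambda>(x, y). (f + g) x y)"
    by (simp add: case_prod_unfold)
  moreover have "\<forall>x y. \<not> (x \<in> tuples p \<and> y \<in> tuples q) \<longrightarrow> (f + g) x y = 0"
    "\<forall>h. \<forall>x\<in>tuples p. \<forall>y\<in>tuples q. act h ((f+g) (gtr p (- h) x) (gtr q (- h) y)) = (f+g) x y"
    using assms unfolding AlcG_iff by (auto simp: act_add)
  ultimately show ?thesis
    unfolding AlcG_iff using identity_nbhd_Int[OF U(1) V(1)] by blast
qed

lemma AlcG_minus:
  assumes "f \<in> AlcG act p q"
  shows "- f \<in> AlcG act p q"
proof -
  from assms obtain U where U: "identity_nbhd U" "continuous_map (XT p q U) euclidean (\<lambda>(x, y). f x y)"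
    unfolding AlcG_iff by blast
  have "continuous_map (XT p q U) euclidean (\<lambda>z. - (\<lambda>(x, y). f x y) z)"
    by (rule cmap_minus) (use U in auto)
  then have "continuous_map (XT p q U) euclidean (\<lambda>(x, y). (- f) x y)"
    by (simp add: case_prod_unfold)
  moreover have "\<forall>x y. \<not> (x \<in> tuples p \<and> y \<in> tuples q) \<longrightarrow> (- f) x y = 0"
    "\<forall>h. \<forall>x\<in>tuples p. \<forall>y\<in>tuples q. act h ((- f) (gtr p (- h) x) (gtr q (- h) y)) = (- f) x y"
    using assms unfolding AlcG_iff by (auto simp: act_minus)
  ultimately show ?thesis
    unfolding AlcG_iff using U by blast
qed

lemma AlcG_diff: "f \<in> AlcG act p q \<Longrightarrow> g \<in> AlcG act p q \<Longrightarrow> f - g \<in> AlcG act p q"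
  using AlcG_add[of f p q "- g"] AlcG_minus[of g] by simp

lemma dh_AlcG:
  assumes "f \<in> AlcG act p q"
  shows "dh p q f \<in> AlcG act (Suc p) q"
proof -
  from assms obtain U where U: "identity_nbhd U" "continuous_map (XT p q U) euclidean (\<lambda>(x, y). f x y)"
    and eq: "\<forall>g. \<forall>x\<in>tuples p. \<forall>y\<in>tuples q. act g (f (gtr p (- g) x) (gtr q (- g) y)) = f x y"
    unfolding AlcG_iff by blast
  have "continuous_map (XT (Suc p) q U) euclidean (\<lambda>z. altsum (Suc p) (\<lambda>i. f (face p i (fst z)) (snd z)))"
    apply (rule cmap_altsum)
    apply (rule cont_XT_comp[OF U(2)])
      apply (rule continuous_map_compose[OF XT_fst face_cont, unfolded o_def])
     apply (rule XT_snd)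
    apply auto
    done
  then have "continuous_map (XT (Suc p) q U) euclidean (\<lambda>(x, y). dh p q f x y)"
    by (rule continuous_map_eq) (auto simp: dh_def Gamma_sub[THEN subsetD])
  moreover have "act g (dh p q f (gtr (Suc p) (- g) x) (gtr q (- g) y)) = dh p q f x y"
    if "x \<in> tuples (Suc p)" "y \<in> tuples q" for g x y
    using that eq by (simp add: dh_def act_altsum face_gtr)
  moreover have "\<forall>x y. \<not> (x \<in> tuples (Suc p) \<and> y \<in> tuples q) \<longrightarrow> dh p q f x y = 0"
    by (simp add: dh_def)
  ultimately show ?thesis
    unfolding AlcG_iff using U by blast
qed

lemma dv_AlcG:
  assumes "f \<in> AlcG act p q"
  shows "dv p q f \<in> AlcG act p (Suc q)"
proof -
  from assms obtain U where U: "identity_nbhd U" "continuous_map (XT p q U) euclidean (\<lambda>(x, y). f x y)"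
    and eq: "\<forall>g. \<forall>x\<in>tuples p. \<forall>y\<in>tuples q. act g (f (gtr p (- g) x) (gtr q (- g) y)) = f x y"
    unfolding AlcG_iff by blast
  have "continuous_map (XT p (Suc q) U) euclidean (\<lambda>z. eps p (altsum (Suc q) (\<lambda>i. f (fst z) (face q i (snd z)))))"
    apply (rule cmap_eps)
    apply (rule cmap_altsum)
    apply (rule cont_XT_comp[OF U(2)])
      apply (rule XT_fst)
     apply (rule continuous_map_compose[OF XT_snd face_cont, unfolded o_def])
    apply (auto intro: face_Gamma)
    done
  then have "continuous_map (XT p (Suc q) U) euclidean (\<lambda>(x, y). dv p q f x y)"
    by (rule continuous_map_eq) (auto simp: dv_eps Gamma_sub[THEN subsetD])
  moreover have "act g (dv p q f (gtr p (- g) x) (gtr (Suc q) (- g) y)) = dv p q f x y"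
    if "x \<in> tuples p" "y \<in> tuples (Suc q)" for g x y
    using that eq by (simp add: dv_eps act_altsum act_eps face_gtr)
  moreover have "\<forall>x y. \<not> (x \<in> tuples p \<and> y \<in> tuples (Suc q)) \<longrightarrow> dv p q f x y = 0"
    by (simp add: dv_eps)
  ultimately show ?thesis
    unfolding AlcG_iff using U by blast
qed

end



definition shift :: "'g \<Rightarrow> nat \<Rightarrow> (nat \<Rightarrow> 'g) \<Rightarrow> (nat \<Rightarrow> 'g)" where
  "shift c p x = restrict (\<lambda>j. if j = 0 then c else x (j - 1)) {..Suc p}"

definition hh :: "nat \<Rightarrow> nat \<Rightarrow> ((nat \<Rightarrow> 'g) \<Rightarrow> (nat \<Rightarrow> 'g) \<Rightarrow> 'a::ab_group_add)
     \<Rightarrow> ((nat \<Rightarrow> 'g) \<Rightarrow> (nat \<Rightarrow> 'g) \<Rightarrow> 'a)" where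
  "hh p q f = (\<lambda>x y. if x \<in> tuples p \<and> y \<in> tuples q then f (shift (y 0) p x) y else 0)"

definition pt :: "'g \<Rightarrow> (nat \<Rightarrow> 'g)" where "pt c = restrict (\<lambda>_. c) {..0}"

definition h0 :: "nat \<Rightarrow> ((nat \<Rightarrow> 'g) \<Rightarrow> (nat \<Rightarrow> 'g) \<Rightarrow> 'a::ab_group_add) \<Rightarrow> ((nat \<Rightarrow> 'g) \<Rightarrow> 'a)" where
  "h0 q f = (\<lambda>y. if y \<in> tuples q then f (pt (y 0)) y else 0)"

definition jp :: "nat \<Rightarrow> ((nat \<Rightarrow> 'g) \<Rightarrow> 'a::ab_group_add) \<Rightarrow> ((nat \<Rightarrow> 'g) \<Rightarrow> (nat \<Rightarrow> 'g) \<Rightarrow> 'a)" where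
  "jp n c = (\<lambda>x y. if x \<in> tuples 0 \<and> y \<in> tuples n then c y else 0)"

lemma jh_jp: "jh n c = (\<lambda>p. if p = 0 then jp n c else 0)"
  by (simp add: jh_def jp_def fun_eq_iff)

lemma shift_tuples[simp]: "shift c p x \<in> tuples (Suc p)"
  by (simp add: shift_def tuples_def)
lemma pt_tuples[simp]: "pt c \<in> tuples 0"
  by (simp add: pt_def tuples_def)

lemma face_shift0: "x \<in> tuples p \<Longrightarrow> face p 0 (shift c p x) = x"
  by (auto simp: face_def shift_def fun_eq_iff tuples_def PiE_def extensional_def)
lemma face_shift_Suc: "face (Suc p) (Suc i) (shift c (Suc p) x) = shift c p (face p i x)"
  by (auto simp: face_def shift_def fun_eq_iff)
lemma face_shift_1: "face 0 (Suc 0) (shift c 0 x) = pt c"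
  by (auto simp: face_def shift_def fun_eq_iff pt_def)

lemma altsum_Suc: "altsum (Suc m) h = h 0 - altsum m (\<lambda>i. h (Suc i))"
proof -
  have "altsum (Suc m) h = eps 0 (h 0) + (\<Sum>i\<le>m. eps (Suc i) (h (Suc i)))"
    unfolding altsum_eps by (rule sum.atMost_Suc_shift)
  also have "\<dots> = h 0 + - (\<Sum>i\<le>m. eps i (h (Suc i)))"
    unfolding eps_Suc sum_negf by (simp add: eps_def)
  finally show ?thesis by (simp add: altsum_eps)
qed

lemma contract:
  assumes supp: "\<forall>x y. \<not> (x \<in> tuples (Suc p) \<and> y \<in> tuples q) \<longrightarrow> f x y = 0"
    and cyc: "dh (Suc p) q f = 0"
  shows "f = dh p q (hh p q f)"
proof (intro ext)
  fix x y
  show "f x y = dh p q (hh p q f) x y"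
  proof (cases "x \<in> tuples (Suc p) \<and> y \<in> tuples q")
    case False thus ?thesis using supp by (auto simp: dh_def)
  next
    case True
    have "dh (Suc p) q f (shift (y 0) (Suc p) x) y = 0" using cyc by simp
    then have "f x y - altsum (Suc p) (\<lambda>i. f (shift (y 0) p (face p i x)) y) = 0"
      using True by (simp add: dh_def altsum_Suc face_shift0 face_shift_Suc)
    then show ?thesis using True by (simp add: dh_def hh_def)
  qed
qed

lemma contract0:
  assumes supp: "\<forall>x y. \<not> (x \<in> tuples 0 \<and> y \<in> tuples q) \<longrightarrow> f x y = 0"
    and cyc: "dh 0 q f = 0"
  shows "f = jp q (h0 q f)"
proof (intro ext)
  fix x y
  show "f x y = jp q (h0 q f) x y"
  proof (cases "x \<in> tuples 0 \<and> y \<in> tuples q")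
    case False thus ?thesis using supp by (auto simp: jp_def)
  next
    case True
    have "dh 0 q f (shift (y 0) 0 x) y = 0" using cyc by simp
    then have "f x y - f (pt (y 0)) y = 0"
      using True by (simp add: dh_def altsum_Suc face_shift0 face_shift_1 altsum_def)
    then show ?thesis using True by (simp add: jp_def h0_def)
  qed
qed

lemma dv_jp: "dv 0 n (jp n c) = jp (Suc n) (dC n c)"
  by (simp add: fun_eq_iff dv_eps jp_def dC_def eps_def)

lemma dh_jp: "dh 0 n (jp n c) = 0"
  by (simp add: fun_eq_iff dh_def jp_def altsum_Suc altsum_def)

lemma jp_inj:
  assumes "\<forall>y. y \<notin> tuples n \<longrightarrow> c y = 0" "\<forall>y. y \<notin> tuples n \<longrightarrow> d y = 0"
    and "jp n c = jp n d"
  shows "c = d"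
proof
  fix y
  show "c y = d y"
  proof (cases "y \<in> tuples n")
    case True
    have "jp n c (pt (y 0)) y = jp n d (pt (y 0)) y" using assms(3) by simp
    thus ?thesis using True by (simp add: jp_def)
  qed (use assms in auto)
qed

lemma shift_gtr: "shift (g + c) p (gtr p g x) = gtr (Suc p) g (shift c p x)"
  by (auto simp: shift_def gtr_def fun_eq_iff)
lemma pt_gtr: "pt (g + c) = gtr 0 g (pt c)"
  by (auto simp: pt_def gtr_def fun_eq_iff)

lemma shift_cont: "continuous_map (XT p q U) (tuple_top (Suc p)) (\<lambda>z. shift (snd z 0) p (fst z))"
proof -
  have "continuous_map (XT p q U) (tuple_top (Suc p))
     (\<lambda>z. restrict (\<lambda>j. if j = 0 then snd z 0 else fst z (j - 1)) {..Suc p})"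
  proof (rule tuple_map_cont)
    fix k assume k: "k \<le> Suc p"
    show "continuous_map (XT p q U) euclidean (\<lambda>z. if k = 0 then snd z 0 else fst z (k - 1))"
    proof (cases "k = 0")
      case True thus ?thesis
        using continuous_map_compose[OF XT_snd proj_cont[of 0 q]] by (simp add: o_def)
    next
      case False
      have "k - 1 \<le> p" using k by simp
      with False show ?thesis
        using continuous_map_compose[OF XT_fst proj_cont[OF \<open>k - 1 \<le> p\<close>]] by (simp add: o_def)
    qed
  qed
  then show ?thesis by (simp add: shift_def)
qed

context
  fixes act :: "'g::topological_group_add \<Rightarrow> 'a::topological_ab_group_add \<Rightarrow> 'a"
  assumes M: "topological_G_module act"
begin

lemma hh_AlcG:
  assumes "f \<in> AlcG act (Suc p) q"
  shows "hh p q f \<in> AlcG act p q"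
proof -
  from assms obtain U where U: "identity_nbhd U" "continuous_map (XT (Suc p) q U) euclidean (\<lambda>(x, y). f x y)"
    and eq: "\<forall>g. \<forall>x\<in>tuples (Suc p). \<forall>y\<in>tuples q. act g (f (gtr (Suc p) (- g) x) (gtr q (- g) y)) = f x y"
    unfolding AlcG_iff by blast
  have "continuous_map (XT p q U) euclidean (\<lambda>z. f (shift (snd z 0) p (fst z)) (snd z))"
    by (rule cont_XT_comp[OF U(2) shift_cont XT_snd]) auto
  then have C: "continuous_map (XT p q U) euclidean (\<lambda>(x, y). hh p q f x y)"
    by (rule continuous_map_eq) (auto simp: hh_def Gamma_sub[THEN subsetD])
  have E: "\<forall>g. \<forall>x\<in>tuples p. \<forall>y\<in>tuples q. act g (hh p q f (gtr p (- g) x) (gtr q (- g) y)) = hh p q f x y"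
    using eq by (simp add: hh_def gtr_0 shift_gtr)
  have S: "\<forall>x y. \<not> (x \<in> tuples p \<and> y \<in> tuples q) \<longrightarrow> hh p q f x y = 0"
    by (simp add: hh_def)
  show ?thesis unfolding AlcG_iff using U(1) C E S by blast
qed

lemma h0_Clc:
  assumes "f \<in> AlcG act 0 q"
  shows "h0 q f \<in> Clc act q"
proof -
  from assms obtain U where U: "identity_nbhd U" "continuous_map (XT 0 q U) euclidean (\<lambda>(x, y). f x y)"
    and eq: "\<forall>g. \<forall>x\<in>tuples 0. \<forall>y\<in>tuples q. act g (f (gtr 0 (- g) x) (gtr q (- g) y)) = f x y"
    unfolding AlcG_iff by blast
  let ?Z = "subtopology (tuple_top q) (Gamma U q)"
  have a: "continuous_map ?Z (tuple_top 0) (\<lambda>y. pt (y 0))"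
    unfolding pt_def
    by (rule tuple_map_cont) (rule continuous_map_from_subtopology[OF proj_cont], simp)
  have b: "continuous_map ?Z (tuple_top q) (\<lambda>y. y)"
    by (rule continuous_map_from_subtopology[OF continuous_map_id[unfolded id_def]])
  have "continuous_map ?Z euclidean (\<lambda>y. f (pt (y 0)) y)"
    by (rule cont_XT_comp[OF U(2) a b]) (use Gamma_sub in auto)
  then have C: "continuous_map ?Z euclidean (h0 q f)"
    by (rule continuous_map_eq) (use Gamma_sub in \<open>auto simp: h0_def\<close>)
  have E: "\<forall>g. \<forall>x\<in>tuples q. act g (h0 q f (gtr q (- g) x)) = h0 q f x"
    using eq by (simp add: h0_def gtr_0 pt_gtr)
  have S: "\<forall>x. x \<notin> tuples q \<longrightarrow> h0 q f x = 0"
    by (simp add: h0_def)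
  show ?thesis unfolding Clc_def using U(1) C E S by blast
qed

lemma jp_AlcG:
  assumes "c \<in> Clc act n"
  shows "jp n c \<in> AlcG act 0 n"
proof -
  from assms obtain U where U: "identity_nbhd U" "continuous_map (subtopology (tuple_top n) (Gamma U n)) euclidean c"
    and eq: "\<forall>g. \<forall>x\<in>tuples n. act g (c (gtr n (- g) x)) = c x"
    unfolding Clc_def by blast
  have "continuous_map (XT 0 n U) (subtopology (tuple_top n) (Gamma U n)) snd"
    by (rule continuous_map_into_subtopology[OF XT_snd]) auto
  from continuous_map_compose[OF this U(2)]
  have "continuous_map (XT 0 n U) euclidean (\<lambda>z. c (snd z))" by (simp add: o_def)
  then have C: "continuous_map (XT 0 n U) euclidean (\<lambda>(x, y). jp n c x y)"
    by (rule continuous_map_eq) (auto simp: jp_def Gamma_sub[THEN subsetD])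
  have E: "\<forall>g. \<forall>x\<in>tuples 0. \<forall>y\<in>tuples n. act g (jp n c (gtr 0 (- g) x) (gtr n (- g) y)) = jp n c x y"
    using eq by (simp add: jp_def)
  have S: "\<forall>x y. \<not> (x \<in> tuples 0 \<and> y \<in> tuples n) \<longrightarrow> jp n c x y = 0"
    by (simp add: jp_def)
  show ?thesis unfolding AlcG_iff using U(1) C E S by blast
qed

end



definition sg :: "nat \<Rightarrow> 'e::zero \<Rightarrow> (nat \<Rightarrow> 'e)" where
  "sg k f = (\<lambda>p. if p = k then f else 0)"

lemma aux0: assumes g: "g = 0" and h: "a + (if c then dv p q g else 0) = 0" shows "a = 0"
  using h unfolding g by (cases c) (simp_all only: dv_zero add_0_right if_True if_False)

lemma jp_zero: "jp n 0 = 0"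
  by (simp add: jp_def fun_eq_iff)

lemma dTot_jh: "dTot n (jh n c) = jh (Suc n) (dC n c)"
proof
  fix p
  show "dTot n (jh n c) p = jh (Suc n) (dC n c) p"
  proof (cases "p = 0")
    case True thus ?thesis by (simp add: dTot_def jh_jp dv_jp)
  next
    case False
    show ?thesis
    proof (cases "p = 1")
      case True thus ?thesis by (cases n) (simp_all add: dTot_def jh_jp dh_jp)
    next
      case False
      with \<open>p \<noteq> 0\<close> show ?thesis by (simp add: dTot_def jh_jp)
    qed
  qed
qed

context
  fixes act :: "'g::topological_group_add \<Rightarrow> 'a::topological_ab_group_add \<Rightarrow> 'a"
  assumes M: "topological_G_module act"
begin

lemma Tot_zero: "0 \<in> Tot act n"
  by (simp add: Tot_def AlcG_zero[OF M])

lemma Tot_add: "a \<in> Tot act n \<Longrightarrow> b \<in> Tot act n \<Longrightarrow> a + b \<in> Tot act n"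
  by (simp add: Tot_def AlcG_add[OF M])

lemma Tot_diff: "a \<in> Tot act n \<Longrightarrow> b \<in> Tot act n \<Longrightarrow> a - b \<in> Tot act n"
  by (simp add: Tot_def AlcG_diff[OF M])

lemma sg_Tot: "k \<le> n \<Longrightarrow> f \<in> AlcG act k (n - k) \<Longrightarrow> sg k f \<in> Tot act n"
  by (auto simp: Tot_def sg_def AlcG_zero[OF M])

lemma jh_Tot: "c \<in> Clc act n \<Longrightarrow> jh n c \<in> Tot act n"
  by (auto simp: Tot_def jh_jp jp_AlcG[OF M] AlcG_zero[OF M])

lemma dTot_Tot:
  assumes t: "t \<in> Tot act n"
  shows "dTot n t \<in> Tot act (Suc n)"
  unfolding Tot_def
proof (intro CollectI conjI allI impI)
  fix p assume p: "p \<le> Suc n"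
  have A: "(if 1 \<le> p then dh (p - 1) (Suc n - p) (t (p - 1)) else 0) \<in> AlcG act p (Suc n - p)"
  proof (cases p)
    case 0 thus ?thesis by (simp add: AlcG_zero[OF M])
  next
    case (Suc p')
    have "t p' \<in> AlcG act p' (n - p')" using t p Suc by (simp add: Tot_def)
    from dh_AlcG[OF M this] show ?thesis using Suc by simp
  qed
  have B: "(if p \<le> n then dv p (n - p) (t p) else 0) \<in> AlcG act p (Suc n - p)"
  proof (cases "p \<le> n")
    case True
    have "t p \<in> AlcG act p (n - p)" using t True by (simp add: Tot_def)
    from dv_AlcG[OF M this] show ?thesis using True by (simp add: Suc_diff_le)
  qed (simp add: AlcG_zero[OF M])
  show "dTot n t p \<in> AlcG act p (Suc n - p)"
    using AlcG_add[OF M A B] p by (simp add: dTot_def)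
qed (simp add: dTot_def)

lemma Tot_supp: "t \<in> Tot act n \<Longrightarrow> p \<le> n \<Longrightarrow> \<forall>x y. \<not> (x \<in> tuples p \<and> y \<in> tuples (n - p)) \<longrightarrow> t p x y = 0"
  by (simp add: Tot_def AlcG_iff)

lemma reduce:
  assumes t: "t \<in> Tot act (Suc m)" and k: "k \<le> m"
    and top: "\<forall>p > Suc k. t p = 0"
    and cyc: "dh (Suc k) (m - k) (t (Suc k)) = 0"
  shows "\<exists>s \<in> Tot act m. t - dTot m s \<in> Tot act (Suc m) \<and> (\<forall>p > k. (t - dTot m s) p = 0)"
proof -
  have "\<forall>p\<le>Suc m. t p \<in> AlcG act p (Suc m - p)" using t by (simp add: Tot_def)
  from this[rule_format, of "Suc k"] k have tk: "t (Suc k) \<in> AlcG act (Suc k) (m - k)" by simp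
  define s0 where "s0 = hh k (m - k) (t (Suc k))"
  have s0: "s0 \<in> AlcG act k (m - k)" unfolding s0_def by (rule hh_AlcG[OF M tk])
  have eq: "t (Suc k) = dh k (m - k) s0"
    unfolding s0_def by (rule contract[OF _ cyc]) (use tk in \<open>simp add: AlcG_iff\<close>)
  have S: "sg k s0 \<in> Tot act m" by (rule sg_Tot[OF k s0])
  have D: "dTot m (sg k s0) \<in> Tot act (Suc m)" by (rule dTot_Tot[OF S])
  have "(t - dTot m (sg k s0)) p = 0" if "p > k" for p
  proof (cases "p = Suc k")
    case True thus ?thesis using eq k by (simp add: dTot_def sg_def Suc_diff_le)
  next
    case False
    then have "p > Suc k" using that by simp
    then show ?thesis using top by (auto simp: dTot_def sg_def)
  qed
  then show ?thesis using S Tot_diff[OF t D] by blast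
qed

lemma surj_step:
  "\<forall>t. t \<in> Tot act n \<longrightarrow> dTot n t = 0 \<longrightarrow> (\<forall>p>k. t p = 0) \<longrightarrow>
     (\<exists>c\<in>cocycles (Clc act) dC n. t - jh n c \<in> coboundaries (Tot act) dTot n)"
proof (induction k)
  case 0
  show ?case
  proof (intro allI impI)
    fix t assume t: "t \<in> Tot act n" and cyc: "dTot n t = 0" and top: "\<forall>p>0. t p = 0"
    have t0: "t 0 \<in> AlcG act 0 n" using t unfolding Tot_def by force
    have "dTot n t 1 = 0" using cyc by simp
    moreover have t1: "t (Suc 0) = 0" using top by simp
    ultimately have d1: "dh 0 n (t 0) = 0" by (cases n) (simp_all add: dTot_def)
    have eq: "t 0 = jp n (h0 n (t 0))"
      by (rule contract0[OF _ d1]) (use t0 in \<open>simp add: AlcG_iff\<close>)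
    define c where "c = h0 n (t 0)"
    have c: "c \<in> Clc act n" unfolding c_def by (rule h0_Clc[OF M t0])
    have "dTot n t 0 = 0" using cyc by simp
    then have "dv 0 n (t 0) = 0" by (simp add: dTot_def)
    moreover have eqc: "t 0 = jp n c" using eq unfolding c_def .
    ultimately have "jp (Suc n) (dC n c) = jp (Suc n) 0"
      by (simp add: dv_jp jp_zero)
    then have "dC n c = 0"
      by (rule jp_inj[rotated 2]) (auto simp: dC_def)
    then have cc: "c \<in> cocycles (Clc act) dC n" using c by (simp add: cocycles_def)
    have "t = jh n c"
      using eqc top by (auto simp: fun_eq_iff jh_jp)
    then have "t - jh n c = 0" by simp
    moreover have "0 \<in> coboundaries (Tot act) dTot n"
      by (auto simp: coboundaries_def dTot_zero intro!: image_eqI[where x=0] Tot_zero)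
    ultimately show "\<exists>c\<in>cocycles (Clc act) dC n. t - jh n c \<in> coboundaries (Tot act) dTot n"
      using cc by metis
  qed
next
  case (Suc k)
  show ?case
  proof (intro allI impI)
    fix t assume t: "t \<in> Tot act n" and cyc: "dTot n t = 0" and top: "\<forall>p>Suc k. t p = 0"
    show "\<exists>c\<in>cocycles (Clc act) dC n. t - jh n c \<in> coboundaries (Tot act) dTot n"
    proof (cases "Suc k \<le> n")
      case False
      then have "\<forall>p>k. t p = 0" using t by (auto simp: Tot_def)
      then show ?thesis using Suc.IH t cyc by blast
    next
      case True
      then obtain m where n: "n = Suc m" and km: "k \<le> m" by (cases n) auto
      have X: "dTot n t (Suc (Suc k)) = 0" using cyc by simp
      have t2: "t (Suc (Suc k)) = 0" using top by simp
      have "dh (Suc k) (m - k) (t (Suc k)) +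
        (if Suc k \<le> m then dv (Suc (Suc k)) (Suc m - Suc (Suc k)) (t (Suc (Suc k))) else 0) = 0"
        using X n km by (simp add: dTot_def)
      from aux0[OF t2 this] have d: "dh (Suc k) (m - k) (t (Suc k)) = 0" .
      obtain s where s: "s \<in> Tot act m" and t': "t - dTot m s \<in> Tot act (Suc m)"
        and top': "\<forall>p > k. (t - dTot m s) p = 0"
        using reduce[OF t[unfolded n] km top d] by blast
      have "dTot n (t - dTot m s) = 0"
        using cyc n by (simp add: dTot_diff dTot_dTot)
      then obtain c where c: "c \<in> cocycles (Clc act) dC n"
        and cb: "(t - dTot m s) - jh n c \<in> coboundaries (Tot act) dTot n"
        using Suc.IH t' top' n by blast
      then obtain b where b: "b \<in> Tot act m" and beq: "(t - dTot m s) - jh n c = dTot m b"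
        using n by (auto simp: coboundaries_def)
      have "t - jh n c = dTot m (b + s)"
        using beq by (simp add: dTot_add algebra_simps)
      moreover have "b + s \<in> Tot act m" by (rule Tot_add[OF b s])
      ultimately have "t - jh n c \<in> coboundaries (Tot act) dTot n"
        using n by (auto simp: coboundaries_def)
      then show ?thesis using c by blast
    qed
  qed
qed

lemma inj_step:
  "\<forall>w. w \<in> Tot act n \<longrightarrow> dTot n w = jh (Suc n) z \<longrightarrow> (\<forall>p>k. w p = 0) \<longrightarrow>
     z \<in> Clc act (Suc n) \<longrightarrow> z \<in> dC n ` Clc act n"
proof (induction k)
  case 0
  show ?case
  proof (intro allI impI)
    fix w assume w: "w \<in> Tot act n" and eqd: "dTot n w = jh (Suc n) z" and top: "\<forall>p>0. w p = 0"
      and z: "z \<in> Clc act (Suc n)"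
    have w0: "w 0 \<in> AlcG act 0 n" using w unfolding Tot_def by force
    have "dTot n w 1 = jh (Suc n) z 1" using eqd by simp
    moreover have w1: "w (Suc 0) = 0" using top by simp
    ultimately have d1: "dh 0 n (w 0) = 0" by (cases n) (simp_all add: dTot_def jh_jp)
    have eq: "w 0 = jp n (h0 n (w 0))"
      by (rule contract0[OF _ d1]) (use w0 in \<open>simp add: AlcG_iff\<close>)
    define c where "c = h0 n (w 0)"
    have c: "c \<in> Clc act n" unfolding c_def by (rule h0_Clc[OF M w0])
    have "dTot n w 0 = jh (Suc n) z 0" using eqd by simp
    then have "dv 0 n (w 0) = jp (Suc n) z" by (simp add: dTot_def jh_jp)
    moreover have eqc: "w 0 = jp n c" using eq unfolding c_def .
    ultimately have "jp (Suc n) (dC n c) = jp (Suc n) z"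
      by (simp add: dv_jp)
    then have "dC n c = z"
      by (rule jp_inj[rotated 2]) (use z in \<open>auto simp: dC_def Clc_def\<close>)
    then show "z \<in> dC n ` Clc act n" using c by blast
  qed
next
  case (Suc k)
  show ?case
  proof (intro allI impI)
    fix w assume w: "w \<in> Tot act n" and eqd: "dTot n w = jh (Suc n) z" and top: "\<forall>p>Suc k. w p = 0"
      and z: "z \<in> Clc act (Suc n)"
    show "z \<in> dC n ` Clc act n"
    proof (cases "Suc k \<le> n")
      case False
      then have "\<forall>p>k. w p = 0" using w by (auto simp: Tot_def)
      then show ?thesis using Suc.IH w eqd z by blast
    next
      case True
      then obtain m where n: "n = Suc m" and km: "k \<le> m" by (cases n) auto
      have X: "dTot n w (Suc (Suc k)) = jh (Suc n) z (Suc (Suc k))" using eqd by simp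
      have t2: "w (Suc (Suc k)) = 0" using top by simp
      have "dh (Suc k) (m - k) (w (Suc k)) +
        (if Suc k \<le> m then dv (Suc (Suc k)) (Suc m - Suc (Suc k)) (w (Suc (Suc k))) else 0) = 0"
        using X n km by (simp add: dTot_def jh_jp)
      from aux0[OF t2 this] have d: "dh (Suc k) (m - k) (w (Suc k)) = 0" .
      obtain s where s: "s \<in> Tot act m" and w': "w - dTot m s \<in> Tot act (Suc m)"
        and top': "\<forall>p > k. (w - dTot m s) p = 0"
        using reduce[OF w[unfolded n] km top d] by blast
      have "dTot n (w - dTot m s) = jh (Suc n) z"
        using eqd n by (simp add: dTot_diff dTot_dTot)
      then show ?thesis using Suc.IH w' top' n z by blast
    qed
  qed
qed

end

theorem main_aux:
  fixes act :: "'g::topological_group_add \<Rightarrow> 'a::topological_ab_group_add \<Rightarrow> 'a"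
  assumes M: "topological_G_module act"
  shows "induces_iso_in_cohomology (Clc act) dC (Tot act) dTot jh"
  unfolding induces_iso_in_cohomology_def
proof (intro allI conjI ballI impI)
  fix n z assume z: "z \<in> cocycles (Clc act) dC n"
  then have zC: "z \<in> Clc act n" and dz: "dC n z = 0" by (auto simp: cocycles_def)
  show "jh n z \<in> cocycles (Tot act) dTot n"
  proof -
    have "dTot n (jh n z) = 0" unfolding dTot_jh dz by (simp add: jh_def fun_eq_iff)
    then show ?thesis using jh_Tot[OF M zC] by (simp add: cocycles_def)
  qed
next
  fix n z assume z: "z \<in> cocycles (Clc act) dC n" and cb: "jh n z \<in> coboundaries (Tot act) dTot n"
  then have zC: "z \<in> Clc act n" and dz: "dC n z = 0" by (auto simp: cocycles_def)
  show "z \<in> coboundaries (Clc act) dC n"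
  proof (cases n)
    case 0
    then have "jh n z = 0" using cb by (simp add: coboundaries_def)
    then have "jh n z 0 = 0" by simp
    then have "jp n z = jp n 0" by (simp add: jh_jp jp_zero)
    then have "z = 0" by (rule jp_inj[rotated 2]) (use zC in \<open>auto simp: Clc_def\<close>)
    then show ?thesis using 0 by (simp add: coboundaries_def)
  next
    case (Suc m)
    then obtain w where w: "w \<in> Tot act m" and eq: "jh (Suc m) z = dTot m w"
      using cb by (auto simp: coboundaries_def)
    have "z \<in> dC m ` Clc act m"
      using inj_step[OF M, of m z m] w eq zC Suc by (auto simp: Tot_def)
    then show ?thesis using Suc by (simp add: coboundaries_def)
  qed
next
  fix n t assume t: "t \<in> cocycles (Tot act) dTot n"
  then show "\<exists>c\<in>cocycles (Clc act) dC n. t - jh n c \<in> coboundaries (Tot act) dTot n"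
    using surj_step[OF M, of n n] by (auto simp: cocycles_def Tot_def)
qed


theorem mainTheorem1:
  fixes act :: "'g::topological_group_add \<Rightarrow> 'a::topological_ab_group_add \<Rightarrow> 'a"
  assumes "topological_G_module act"
  shows "induces_iso_in_cohomology (Clc act) dC (Tot act) dTot jh"
  using main_aux[OF assms] .

end
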